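(* Let $(\sigma_n)_{n=1}^\infty$ be a strictly increasing sequence of positive integers with $\sigma_{n+1}\ge\sigma_n+n$ for all $n\ge1$ and such that $\lim_{n\to\infty}\frac{\sigma_n-\sigma_{n-1}}{n}=\beta\in[1,\infty]$ exists. Let \[G((\sigma_n)_{n=1}^\infty)=\{x\in J\colon a_{\sigma_n}(x),\ldots,a_{\sigma_n+n-1}(x)\ \text{is an arithmetic progression for all sufficiently large}\ n\}.\] Then \[\dim_{\rm H} G((\sigma_n)_{n=1}^\infty)\ge\begin{cases}\dfrac{\beta-1}{2\beta}&\text{if }\beta<\infty,\\ 1/2&\text{otherwise.}\end{cases}\]
   Context: Every irrational $x\in(0,1)$ has a regular continued fraction expansion with partial quotients $a_n(x)\in\mathbb N$, $n\ge1$. $J=\{x\in(0,1)\setminus\mathbb Q\colon a_n(x)<a_{n+1}(x)\text{ for every }n\ge1\}$. $\dim_{\rm H}$ denotes Hausdorff dimension in $[0,1]$. *)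

theory Defs
  imports "HOL-Analysis.Analysis"
begin

text \<open>Gauss map and regular continued fraction partial quotients (indexed from 1).\<close>
definition gauss_map :: "real \<Rightarrow> real" where
  "gauss_map x = frac (1 / x)"

definition cf_digit :: "nat \<Rightarrow> real \<Rightarrow> nat" where
  "cf_digit n x = nat \<lfloor>1 / ((gauss_map ^^ (n - 1)) x)\<rfloor>"

definition J_set :: "real set" where
  "J_set = {x. 0 < x \<and> x < 1 \<and> x \<notin> \<rat> \<and> (\<forall>n\<ge>1. cf_digit n x < cf_digit (Suc n) x)}"

definition hausdorff_pre :: "real \<Rightarrow> real \<Rightarrow> real set \<Rightarrow> ennreal" where
  "hausdorff_pre s \<delta> E = (INF U \<in> {U :: nat \<Rightarrow> real set. E \<subseteq> (\<Union>i. U i) \<and>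
        (\<forall>i. bounded (U i) \<and> diameter (U i) \<le> \<delta>)}.
        (\<Sum>i. ennreal (diameter (U i) powr s)))"

definition hausdorff_measure :: "real \<Rightarrow> real set \<Rightarrow> ennreal" where
  "hausdorff_measure s E = (SUP \<delta> \<in> {0<..}. hausdorff_pre s \<delta> E)"

definition hausdorff_dim :: "real set \<Rightarrow> real" where
  "hausdorff_dim E = Inf {s. 0 < s \<and> hausdorff_measure s E = 0}"

definition is_AP_block :: "real \<Rightarrow> nat \<Rightarrow> nat \<Rightarrow> bool" where
  "is_AP_block x k m = (\<exists>d::int. \<forall>j<m.
      int (cf_digit (k + j) x) = int (cf_digit k x) + int j * d)"

definition G_set :: "(nat \<Rightarrow> nat) \<Rightarrow> real set" where
  "G_set \<sigma> = {x \<in> J_set. \<exists>N. \<forall>n\<ge>N. is_AP_block x (\<sigma> n) n}"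

end

theory Submission
  imports Defs "HOL-Analysis.Analysis"
begin

fun fcf :: "(nat \<Rightarrow> nat) \<Rightarrow> nat \<Rightarrow> nat \<Rightarrow> real" where
  "fcf a 0 r = 0"
| "fcf a (Suc n) r = 1 / (real (a (Suc r)) + fcf a n (Suc r))"

definition Xcf :: "(nat \<Rightarrow> nat) \<Rightarrow> nat \<Rightarrow> real" where
  "Xcf a r = (\<Sum>k. fcf a (Suc k) r - fcf a k r)"

lemma inv_diff: 
  fixes c u v :: real assumes "c \<ge> 2" "u \<ge> 0" "v \<ge> 0"
  shows "\<bar>1/(c+u) - 1/(c+v)\<bar> = \<bar>u - v\<bar> / ((c+u)*(c+v))"
  using assms by (simp add: field_simps abs_div abs_minus_commute)

locale digs =
  fixes a :: "nat \<Rightarrow> nat"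
  assumes a2: "\<And>k. k \<ge> 1 \<Longrightarrow> a k \<ge> 2"
begin

lemma fcf_bounds: "0 \<le> fcf a n r \<and> fcf a n r \<le> 1/2"
proof (induction n arbitrary: r)
  case 0 then show ?case by simp
next
  case (Suc n)
  have "a (Suc r) \<ge> 2" using a2 by simp
  then have d: "real (a (Suc r)) + fcf a n (Suc r) \<ge> 2" using Suc[of "Suc r"] by linarith
  have "fcf a (Suc n) r = 1 / (real (a (Suc r)) + fcf a n (Suc r))" by simp
  moreover have "1 / (real (a (Suc r)) + fcf a n (Suc r)) \<le> 1/2" using d by (simp add: field_simps)
  moreover have "0 \<le> 1 / (real (a (Suc r)) + fcf a n (Suc r))" using d by simp
  ultimately show ?case by linarith
qed

lemma fcf_contr: "\<bar>fcf a (Suc n) r - fcf a n r\<bar> \<le> (1/4)^n"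
proof (induction n arbitrary: r)
  case 0 then show ?case using fcf_bounds[of 1 r] by simp
next
  case (Suc n)
  have c: "real (a (Suc r)) \<ge> 2" using a2[of "Suc r"] by simp
  let ?u = "fcf a (Suc n) (Suc r)" and ?v = "fcf a n (Suc r)"
  have u: "?u \<ge> 0" and v: "?v \<ge> 0" using fcf_bounds by auto
  have h1: "2 \<le> a (Suc r) + ?u" using c u by linarith
  have h2: "2 \<le> a (Suc r) + ?v" using c v by linarith
  have "\<bar>fcf a (Suc (Suc n)) r - fcf a (Suc n) r\<bar> = \<bar>?u - ?v\<bar> / ((a (Suc r) + ?u)*(a (Suc r) + ?v))"
    using inv_diff[OF c u v] by simp
  also have "\<dots> \<le> \<bar>?u - ?v\<bar> / 4"
  proof (rule divide_left_mono)
    have "(2::real)*2 \<le> (a (Suc r) + ?u)*(a (Suc r) + ?v)"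
      by (rule mult_mono[OF h1 h2]) (use h1 in linarith, simp)
    then show "4 \<le> (a (Suc r) + ?u)*(a (Suc r) + ?v)" by simp
  qed (use h1 h2 in \<open>auto intro!: mult_pos_pos\<close>)
  also have "\<dots> \<le> (1/4)^n / 4" using Suc[of "Suc r"] by simp
  finally show ?case by simp
qed

lemma summ: "summable (\<lambda>k. fcf a (Suc k) r - fcf a k r)"
  by (rule summable_comparison_test[where g = "\<lambda>n. (1/4::real)^n"])
     (use fcf_contr in \<open>auto intro!: summable_geometric\<close>)

lemma fcf_lim: "(\<lambda>n. fcf a n r) \<longlonglongrightarrow> Xcf a r"
proof -
  have "(\<lambda>n. \<Sum>k<n. fcf a (Suc k) r - fcf a k r) \<longlonglongrightarrow> Xcf a r"
    unfolding Xcf_def by (rule summable_LIMSEQ[OF summ])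
  moreover have "(\<Sum>k<n. fcf a (Suc k) r - fcf a k r) = fcf a n r" for n
    by (induction n) auto
  ultimately show ?thesis by simp
qed

lemma X_bounds: "0 \<le> Xcf a r \<and> Xcf a r \<le> 1/2"
proof -
  have "0 \<le> Xcf a r" by (rule LIMSEQ_le_const[OF fcf_lim]) (use fcf_bounds in auto)
  moreover have "Xcf a r \<le> 1/2" by (rule LIMSEQ_le_const2[OF fcf_lim]) (use fcf_bounds in auto)
  ultimately show ?thesis by simp
qed

lemma X_rec: "Xcf a r = 1 / (real (a (Suc r)) + Xcf a (Suc r))"
proof -
  have "(\<lambda>n. fcf a (Suc n) r) \<longlonglongrightarrow> Xcf a r" using fcf_lim LIMSEQ_Suc by blast
  moreover have "(\<lambda>n. fcf a (Suc n) r) \<longlonglongrightarrow> 1 / (real (a (Suc r)) + Xcf a (Suc r))"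
  proof -
    have "real (a (Suc r)) + Xcf a (Suc r) \<noteq> 0" using X_bounds[of "Suc r"] a2[of "Suc r"] by simp
    then show ?thesis unfolding fcf.simps by (intro tendsto_intros fcf_lim)
  qed
  ultimately show ?thesis using LIMSEQ_unique by blast
qed

lemma X_pos: "0 < Xcf a r"
  using X_rec[of r] X_bounds[of "Suc r"] a2[of "Suc r"] by simp

lemma X_inv: "1 / Xcf a r = real (a (Suc r)) + Xcf a (Suc r)"
  by (subst X_rec) simp

lemma gauss_X: "gauss_map (Xcf a r) = Xcf a (Suc r)"
proof -
  have "1 / Xcf a r = real (a (Suc r)) + Xcf a (Suc r)" by (rule X_inv)
  then have "gauss_map (Xcf a r) = frac (of_int (int (a (Suc r))) + Xcf a (Suc r))"
    unfolding gauss_map_def by simp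
  also have "\<dots> = frac (Xcf a (Suc r))" by (rule frac_add_of_int_left)
  also have "\<dots> = Xcf a (Suc r)" using X_bounds[of "Suc r"] by (simp add: frac_eq)
  finally show ?thesis .
qed

lemma iter_X: "(gauss_map ^^ k) (Xcf a 0) = Xcf a k"
  by (induction k) (auto simp: gauss_X)

lemma digit_X: "k \<ge> 1 \<Longrightarrow> cf_digit k (Xcf a 0) = a k"
proof -
  assume k: "k \<ge> 1"
  then obtain r where r: "k = Suc r" by (cases k) auto
  have "1 / Xcf a r = real (a (Suc r)) + Xcf a (Suc r)" by (rule X_inv)
  then have "\<lfloor>1 / Xcf a r\<rfloor> = int (a (Suc r))" using X_bounds[of "Suc r"] 
    by (simp add: floor_eq_iff)
  then show ?thesis unfolding cf_digit_def using r by (simp add: iter_X)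
qed

lemma X_irrat: "Xcf a 0 \<notin> \<rat>"
proof
  assume "Xcf a 0 \<in> \<rat>"
  then obtain p :: int and q :: nat where q: "q > 0" and pq: "Xcf a 0 = p / q"
    by (metis Rats_cases' of_int_of_nat_eq zero_less_imp_eq_int)
  have step: "\<exists>q'::nat. 0 < q' \<and> q' + r \<le> q \<and> Xcf a r * q' \<in> \<int>" for r
  proof (induction r)
    case 0 then show ?case using q pq by (intro exI[of _ q]) auto
  next
    case (Suc r)
    then obtain q' :: nat where q': "0 < q'" "q' + r \<le> q" "Xcf a r * q' \<in> \<int>" by blast
    then obtain p' :: int where p': "Xcf a r * q' = p'" by (metis Ints_cases)
    have xr: "0 < Xcf a r" "Xcf a r < 1" using X_pos[of r] X_bounds[of r] by auto
    have "0 < real_of_int p'" using p' xr q' by (metis of_nat_0_less_iff mult_pos_pos)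
    then have pp: "0 < p'" by simp
    have "Xcf a r * q' < 1 * real q'" using xr q' by (intro mult_strict_right_mono) auto
    then have "real_of_int p' < q'" using p' by simp
    then have pq': "p' < int q'" by simp
    have "Xcf a (Suc r) = 1 / Xcf a r - a (Suc r)" using X_inv[of r] by simp
    then have e: "Xcf a r * Xcf a (Suc r) + Xcf a r * real (a (Suc r)) = 1" 
      using xr by (simp add: field_simps)
    have "Xcf a (Suc r) * p' + real (a (Suc r)) * p' = q' * (Xcf a r * Xcf a (Suc r) + Xcf a r * real (a (Suc r)))"
      by (simp add: p'[symmetric] algebra_simps)
    then have "Xcf a (Suc r) * p' = q' - real (a (Suc r)) * p'" using e by simp
    then have "Xcf a (Suc r) * real (nat p') \<in> \<int>" using pp by simp
    moreover have "0 < nat p'" "nat p' + Suc r \<le> q" using pp pq' q' by auto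
    ultimately show ?case by blast
  qed
  from step[of q] show False by auto
qed

end

lemma X_step_lower:
  assumes "digs a" "digs b" "a (Suc r) = b (Suc r)"
  shows "\<bar>Xcf a r - Xcf b r\<bar> \<ge> \<bar>Xcf a (Suc r) - Xcf b (Suc r)\<bar> / (real (a (Suc r)) + 1)^2"
proof -
  let ?c = "real (a (Suc r))" and ?u = "Xcf a (Suc r)" and ?v = "Xcf b (Suc r)"
  have c: "?c \<ge> 2" using digs.a2[OF assms(1), of "Suc r"] by simp
  have u: "0 \<le> ?u" "?u \<le> 1/2" using digs.X_bounds[OF assms(1)] by auto
  have v: "0 \<le> ?v" "?v \<le> 1/2" using digs.X_bounds[OF assms(2)] by auto
  have xa: "Xcf a r = 1/(?c + ?u)" by (rule digs.X_rec[OF assms(1)])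
  have xb: "Xcf b r = 1/(?c + ?v)" using digs.X_rec[OF assms(2), of r] assms(3) by simp
  have "\<bar>Xcf a r - Xcf b r\<bar> = \<bar>?u - ?v\<bar> / ((?c+?u)*(?c+?v))"
    unfolding xa xb by (rule inv_diff[OF c u(1) v(1)])
  also have "\<dots> \<ge> \<bar>?u - ?v\<bar> / (?c + 1)^2"
  proof (rule divide_left_mono)
    have h1: "?c+?u \<le> ?c+1" using u by linarith
    have h2: "?c+?v \<le> ?c+1" using v by linarith
    have "(?c+?u)*(?c+?v) \<le> (?c+1)*(?c+1)" by (rule mult_mono[OF h1 h2]) (use c in linarith, use c v in linarith)
    then show "(?c+?u)*(?c+?v) \<le> (?c+1)^2" by (simp add: power2_eq_square)
    have pp: "0 < (?c+?u)*(?c+?v)" using c u v by (intro mult_pos_pos) auto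
    show "0 < (?c+1)^2 * ((?c+?u)*(?c+?v))" using c by (intro mult_pos_pos[OF _ pp]) simp
  qed simp
  finally show ?thesis .
qed

lemma X_prefix_lower:
  assumes "digs a" "digs b" "\<And>j. 1 \<le> j \<Longrightarrow> j \<le> r \<Longrightarrow> a j = b j"
  shows "\<bar>Xcf a 0 - Xcf b 0\<bar> \<ge> \<bar>Xcf a r - Xcf b r\<bar> / (\<Prod>j\<in>{1..r}. (real (a j) + 1)^2)"
  using assms(3)
proof (induction r)
  case 0 then show ?case by simp
next
  case (Suc r)
  have IH: "\<bar>Xcf a 0 - Xcf b 0\<bar> \<ge> \<bar>Xcf a r - Xcf b r\<bar> / (\<Prod>j\<in>{1..r}. (real (a j) + 1)^2)"
  proof (rule Suc.IH)
    fix j assume "1 \<le> j" "j \<le> r" then show "a j = b j" using Suc.prems by simp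
  qed
  have P: "(\<Prod>j\<in>{1..r}. (real (a j) + 1)^2) > 0" by (intro prod_pos) auto
  have st: "\<bar>Xcf a r - Xcf b r\<bar> \<ge> \<bar>Xcf a (Suc r) - Xcf b (Suc r)\<bar> / (real (a (Suc r)) + 1)^2"
    by (rule X_step_lower[OF assms(1,2)]) (rule Suc.prems, simp_all)
  have "(\<Prod>j\<in>{1..Suc r}. (real (a j) + 1)^2) = (\<Prod>j\<in>{1..r}. (real (a j) + 1)^2) * (real (a (Suc r)) + 1)^2"
    by (simp add: prod.nat_ivl_Suc')
  then have "\<bar>Xcf a (Suc r) - Xcf b (Suc r)\<bar> / (\<Prod>j\<in>{1..Suc r}. (real (a j) + 1)^2)
     = (\<bar>Xcf a (Suc r) - Xcf b (Suc r)\<bar> / (real (a (Suc r)) + 1)^2) / (\<Prod>j\<in>{1..r}. (real (a j) + 1)^2)"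
    by (simp only: divide_divide_eq_left mult.commute)
  also have "\<dots> \<le> \<bar>Xcf a r - Xcf b r\<bar> / (\<Prod>j\<in>{1..r}. (real (a j) + 1)^2)"
    using st P by (intro divide_right_mono) auto
  finally show ?case using IH by linarith
qed

lemma X_last_lower:
  assumes "digs a" "digs b"
  shows "\<bar>Xcf a r - Xcf b r\<bar> \<ge> \<bar>real (a (Suc r)) - real (b (Suc r))\<bar> / (2 * (real (a (Suc r)) + 1) * (real (b (Suc r)) + 1))"
proof -
  have gen: "\<bar>1/(A+u) - 1/(B+v)\<bar> \<ge> \<bar>A - B\<bar> / (2*(A+1)*(B+1))"
    if "A \<ge> 2" "B \<ge> 2" "0 \<le> u" "u \<le> 1/2" "0 \<le> v" "v \<le> 1/2" "A \<le> B"
      and AB: "A \<in> \<int>" "B \<in> \<int>" for A B u v :: real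
  proof (cases "A = B")
    case True then show ?thesis by simp
  next
    case False
    obtain i j where ij: "A = of_int i" "B = of_int j" using AB by (auto elim!: Ints_cases)
    have "A + 1 \<le> B" using False \<open>A \<le> B\<close> unfolding ij by simp
    have pA: "A + u > 0" "B + v > 0" using that by auto
    have "1/(A+u) - 1/(B+v) = (B + v - A - u)/((A+u)*(B+v))" using pA by (simp add: field_simps)
    also have "\<dots> \<ge> ((B - A)/2) / ((A+1)*(B+1))"
    proof (rule frac_le)
      have "u \<le> 1/2" by fact
      then show "(B - A)/2 \<le> B + v - A - u" using \<open>0 \<le> v\<close> \<open>A + 1 \<le> B\<close> by (simp add: field_simps)
      show "0 < (A+u)*(B+v)" using pA by simp
      show "(A+u)*(B+v) \<le> (A+1)*(B+1)" by (rule mult_mono) (use that in auto)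
    qed (use that \<open>A + 1 \<le> B\<close> in auto)
    also have "((B - A)/2) / ((A+1)*(B+1)) = (B - A) / (2*(A+1)*(B+1))" by simp
    finally have f: "(B - A) / (2*(A+1)*(B+1)) \<le> 1/(A+u) - 1/(B+v)" .
    have "\<bar>A - B\<bar> = B - A" using \<open>A \<le> B\<close> by simp
    then show ?thesis using f by (metis abs_ge_self order_trans)
  qed
  let ?A = "real (a (Suc r))" and ?B = "real (b (Suc r))" and ?u = "Xcf a (Suc r)" and ?v = "Xcf b (Suc r)"
  have A: "?A \<ge> 2" using digs.a2[OF assms(1), of "Suc r"] by simp
  have B: "?B \<ge> 2" using digs.a2[OF assms(2), of "Suc r"] by simp
  have u: "0 \<le> ?u" "?u \<le> 1/2" using digs.X_bounds[OF assms(1)] by auto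
  have v: "0 \<le> ?v" "?v \<le> 1/2" using digs.X_bounds[OF assms(2)] by auto
  have xa: "Xcf a r = 1/(?A + ?u)" by (rule digs.X_rec[OF assms(1)])
  have xb: "Xcf b r = 1/(?B + ?v)" by (rule digs.X_rec[OF assms(2)])
  show ?thesis
  proof (cases "?A \<le> ?B")
    case True
    show ?thesis unfolding xa xb by (rule gen) (use A B u v True in auto)
  next
    case False
    have "\<bar>1/(?B + ?v) - 1/(?A + ?u)\<bar> \<ge> \<bar>?B - ?A\<bar> / (2*(?B+1)*(?A+1))"
      by (rule gen) (use A B u v False in auto)
    moreover have "2*(?B+1)*(?A+1) = 2*(?A+1)*(?B+1)" by (simp only: mult_ac)
    moreover have "\<bar>?B - ?A\<bar> = \<bar>?A - ?B\<bar>" by (rule abs_minus_commute)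
    moreover have "\<bar>1/(?B + ?v) - 1/(?A + ?u)\<bar> = \<bar>1/(?A + ?u) - 1/(?B + ?v)\<bar>" by (rule abs_minus_commute)
    ultimately show ?thesis unfolding xa xb by simp
  qed
qed

definition blk :: "(nat \<Rightarrow> nat) \<Rightarrow> nat \<Rightarrow> bool" where
  "blk \<sigma> k = (\<exists>m. 1 \<le> m \<and> \<sigma> m \<le> k \<and> k < \<sigma> m + m)"
definition bidx :: "(nat \<Rightarrow> nat) \<Rightarrow> nat \<Rightarrow> nat" where
  "bidx \<sigma> k = (THE m. 1 \<le> m \<and> \<sigma> m \<le> k \<and> k < \<sigma> m + m)"
definition Wf :: "(nat \<Rightarrow> nat) \<Rightarrow> nat \<Rightarrow> nat" where
  "Wf \<sigma> n = (\<Sum>j\<in>{j\<in>{1..n}. \<not> blk \<sigma> j}. j)"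
definition Phi :: "(nat \<Rightarrow> nat) \<Rightarrow> real \<Rightarrow> nat \<Rightarrow> int" where
  "Phi \<sigma> y k = \<lfloor>y * 2 ^ Wf \<sigma> k\<rfloor>"
definition cc :: "(nat \<Rightarrow> nat) \<Rightarrow> real \<Rightarrow> nat \<Rightarrow> nat" where
  "cc \<sigma> y k = nat (Phi \<sigma> y k - 2 ^ k * Phi \<sigma> y (k - 1))"
definition dig :: "(nat \<Rightarrow> nat) \<Rightarrow> real \<Rightarrow> nat \<Rightarrow> nat" where
  "dig \<sigma> y k = (if blk \<sigma> k then 2 ^ \<sigma> (bidx \<sigma> k) + (k - \<sigma> (bidx \<sigma> k)) else 2 ^ k + cc \<sigma> y k)"
definition gmap :: "(nat \<Rightarrow> nat) \<Rightarrow> real \<Rightarrow> real" where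
  "gmap \<sigma> y = Xcf (dig \<sigma> y) 0"

lemma pow_add_le: "(2::nat) ^ b + t \<le> 2 ^ (b + t)"
proof (induction t)
  case 0 then show ?case by simp
next
  case (Suc t)
  have "(1::nat) \<le> 2 ^ (b + t)" by simp
  then show ?case using Suc by (simp only: add_Suc_right power_Suc)
qed

locale sig =
  fixes \<sigma> :: "nat \<Rightarrow> nat"
  assumes pos: "\<And>n. n \<ge> 1 \<Longrightarrow> 0 < \<sigma> n"
    and gap: "\<And>n. n \<ge> 1 \<Longrightarrow> \<sigma> (Suc n) \<ge> \<sigma> n + n"
begin

lemma sep: "1 \<le> m \<Longrightarrow> m < m' \<Longrightarrow> \<sigma> m + m \<le> \<sigma> m'"
proof (induction m' rule: less_induct)
  case (less m')
  then obtain p where p: "m' = Suc p" by (cases m') auto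
  show ?case
  proof (cases "m = p")
    case True then show ?thesis using gap[of m] less p by simp
  next
    case False
    then have "\<sigma> m + m \<le> \<sigma> p" using less p by auto
    moreover have "\<sigma> p \<le> \<sigma> (Suc p)" using gap[of p] less p False by auto
    ultimately show ?thesis using p by simp
  qed
qed

lemma mono1: "1 \<le> m \<Longrightarrow> m \<le> m' \<Longrightarrow> \<sigma> m \<le> \<sigma> m'"
  using sep[of m m'] by (cases "m = m'") auto

lemma blk_uniq: assumes "1 \<le> m" "\<sigma> m \<le> k" "k < \<sigma> m + m" "1 \<le> m'" "\<sigma> m' \<le> k" "k < \<sigma> m' + m'"
  shows "m = m'"
proof (rule ccontr)
  assume "m \<noteq> m'"
  then have "m < m' \<or> m' < m" by auto
  then show False using sep[of m m'] sep[of m' m] assms by auto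
qed

lemma bidx_eq: assumes "1 \<le> m" "\<sigma> m \<le> k" "k < \<sigma> m + m" shows "bidx \<sigma> k = m"
  unfolding bidx_def using assms blk_uniq by (intro the_equality) blast+

lemma sig_ge: "1 \<le> m \<Longrightarrow> 2 * \<sigma> m + m \<ge> m * m + 2"
proof (induction m rule: nat_induct_at_least)
  case base then show ?case using pos[of 1] by simp
next
  case (Suc m)
  have "Suc m * Suc m = m * m + 2 * m + 1" by simp
  then show ?case using gap[of m] Suc by linarith
qed

lemma sig_ge_m: "1 \<le> m \<Longrightarrow> m \<le> \<sigma> m"
proof (induction m rule: nat_induct_at_least)
  case base then show ?case using pos[of 1] by simp
next
  case (Suc m)
  then show ?case using gap[of m] by auto
qed

lemma Wf_free: "1 \<le> k \<Longrightarrow> \<not> blk \<sigma> k \<Longrightarrow> Wf \<sigma> k = Wf \<sigma> (k - 1) + k"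
proof -
  assume k: "1 \<le> k" "\<not> blk \<sigma> k"
  have e: "{j\<in>{1..k}. \<not> blk \<sigma> j} = insert k {j\<in>{1..k-1}. \<not> blk \<sigma> j}" using k by auto
  have fin: "finite {j\<in>{1..k-1}. \<not> blk \<sigma> j}" by simp
  have nk: "k \<notin> {j\<in>{1..k-1}. \<not> blk \<sigma> j}" using k by auto
  show ?thesis unfolding Wf_def e sum.insert[OF fin nk] by simp
qed

lemma Wf_blk: "blk \<sigma> k \<Longrightarrow> Wf \<sigma> k = Wf \<sigma> (k - 1)"
proof -
  assume k: "blk \<sigma> k"
  have "{j\<in>{1..k}. \<not> blk \<sigma> j} = {j\<in>{1..k-1}. \<not> blk \<sigma> j}"
  proof -
    { fix j assume j: "j \<in> {1..k}" "\<not> blk \<sigma> j"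
      then have "j \<noteq> k" using k by auto
      then have "j \<le> k-1" using j by auto }
    then show ?thesis by auto
  qed
  then show ?thesis unfolding Wf_def by simp
qed

lemma Wf_0: "Wf \<sigma> 0 = 0" unfolding Wf_def by simp

lemma Phi_0: "y \<in> {0..<1} \<Longrightarrow> Phi \<sigma> y 0 = 0"
  unfolding Phi_def Wf_0 by (simp add: floor_eq_iff)

lemma cc_props:
  assumes "1 \<le> k" "\<not> blk \<sigma> k" "0 \<le> y"
  shows "0 \<le> Phi \<sigma> y k - 2 ^ k * Phi \<sigma> y (k - 1)" "Phi \<sigma> y k - 2 ^ k * Phi \<sigma> y (k - 1) < 2 ^ k"
    "cc \<sigma> y k < 2 ^ k"
proof -
  define z where "z = y * 2 ^ Wf \<sigma> (k - 1)"
  have e: "y * 2 ^ Wf \<sigma> k = z * 2 ^ k" unfolding z_def Wf_free[OF assms(1,2)] by (simp add: power_add)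
  have 1: "Phi \<sigma> y k = \<lfloor>z * 2 ^ k\<rfloor>" "Phi \<sigma> y (k - 1) = \<lfloor>z\<rfloor>" unfolding Phi_def e z_def by auto
  have "of_int (2 ^ k * \<lfloor>z\<rfloor>) \<le> z * 2 ^ k" by (simp add: mult.commute)
  then have a: "2 ^ k * \<lfloor>z\<rfloor> \<le> \<lfloor>z * 2 ^ k\<rfloor>" by (simp add: le_floor_iff)
  have "z * 2 ^ k < (of_int \<lfloor>z\<rfloor> + 1) * 2 ^ k" by (intro mult_strict_right_mono) auto
  then have "z * 2 ^ k < of_int (2 ^ k * \<lfloor>z\<rfloor> + 2 ^ k)" by (simp add: algebra_simps)
  then have b: "\<lfloor>z * 2 ^ k\<rfloor> < 2 ^ k * \<lfloor>z\<rfloor> + 2 ^ k" by (simp add: floor_less_iff)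
  show "0 \<le> Phi \<sigma> y k - 2 ^ k * Phi \<sigma> y (k - 1)" using a 1 by simp
  show c: "Phi \<sigma> y k - 2 ^ k * Phi \<sigma> y (k - 1) < 2 ^ k" using b 1 by simp
  have a': "0 \<le> Phi \<sigma> y k - 2 ^ k * Phi \<sigma> y (k - 1)" using a 1 by simp
  show "cc \<sigma> y k < 2 ^ k" unfolding cc_def using c a' by (subst nat_less_iff) auto
qed

lemma dig_free: "1 \<le> k \<Longrightarrow> \<not> blk \<sigma> k \<Longrightarrow> 0 \<le> y \<Longrightarrow> 2 ^ k \<le> dig \<sigma> y k \<and> dig \<sigma> y k < 2 ^ Suc k"
  unfolding dig_def using cc_props(3)[of k y] by auto

lemma dig_blk: "1 \<le> m \<Longrightarrow> \<sigma> m \<le> k \<Longrightarrow> k < \<sigma> m + m \<Longrightarrow> dig \<sigma> y k = 2 ^ \<sigma> m + (k - \<sigma> m)"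
  unfolding dig_def blk_def using bidx_eq by auto

lemma dig_bounds: assumes "1 \<le> k" "0 \<le> y" shows "2 \<le> dig \<sigma> y k" "dig \<sigma> y k < 2 ^ Suc k"
proof -
  have "2 \<le> dig \<sigma> y k \<and> dig \<sigma> y k < 2 ^ Suc k"
  proof (cases "blk \<sigma> k")
    case True
    then obtain m where m: "1 \<le> m" "\<sigma> m \<le> k" "k < \<sigma> m + m" unfolding blk_def by auto
    have d: "dig \<sigma> y k = 2 ^ \<sigma> m + (k - \<sigma> m)" by (rule dig_blk[OF m])
    have "(2::nat) ^ 1 \<le> 2 ^ \<sigma> m" using pos[OF m(1)] by (intro power_increasing) auto
    moreover have "(2::nat) ^ \<sigma> m + (k - \<sigma> m) \<le> 2 ^ (\<sigma> m + (k - \<sigma> m))" by (rule pow_add_le)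
    moreover have "(2::nat) ^ k < 2 ^ Suc k" by simp
    ultimately show ?thesis using d m by auto
  next
    case False
    have "(2::nat) ^ 1 \<le> 2 ^ k" using assms by (intro power_increasing) auto
    then show ?thesis using dig_free[OF assms(1) False assms(2)] by auto
  qed
  then show "2 \<le> dig \<sigma> y k" "dig \<sigma> y k < 2 ^ Suc k" by auto
qed

lemma dig_incr: assumes "1 \<le> k" "0 \<le> y" shows "dig \<sigma> y k < dig \<sigma> y (Suc k)"
proof (cases "blk \<sigma> (Suc k)")
  case False
  then show ?thesis using dig_free[of "Suc k" y] dig_bounds[OF assms] assms by auto
next
  case True
  then obtain m where m: "1 \<le> m" "\<sigma> m \<le> Suc k" "Suc k < \<sigma> m + m" unfolding blk_def by auto
  show ?thesis
  proof (cases "\<sigma> m = Suc k")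
    case True
    then show ?thesis using dig_blk[OF m, of y] dig_bounds[OF assms] by simp
  next
    case False
    then have m': "\<sigma> m \<le> k" "k < \<sigma> m + m" using m by auto
    show ?thesis using dig_blk[OF m, of y] dig_blk[OF m(1) m', of y] m' by simp
  qed
qed

lemma digs_dig: "0 \<le> y \<Longrightarrow> digs (dig \<sigma> y)"
  unfolding digs_def using dig_bounds by auto

lemma gmap_G: assumes y: "y \<in> {0..<1}" shows "gmap \<sigma> y \<in> G_set \<sigma>"
proof -
  interpret d: digs "dig \<sigma> y" using digs_dig y by auto
  have x: "0 < gmap \<sigma> y" "gmap \<sigma> y < 1" unfolding gmap_def using d.X_pos[of 0] d.X_bounds[of 0] by auto
  have irr: "gmap \<sigma> y \<notin> \<rat>" unfolding gmap_def by (rule d.X_irrat)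
  have cd: "cf_digit k (gmap \<sigma> y) = dig \<sigma> y k" if "k \<ge> 1" for k
    unfolding gmap_def using d.digit_X that by auto
  have J: "gmap \<sigma> y \<in> J_set" unfolding J_set_def using x irr cd dig_incr y by auto
  have AP: "is_AP_block (gmap \<sigma> y) (\<sigma> n) n" for n
  proof (cases "n \<ge> 1")
    case False then show ?thesis unfolding is_AP_block_def by auto
  next
    case True
    have "int (cf_digit (\<sigma> n + j) (gmap \<sigma> y)) = int (cf_digit (\<sigma> n) (gmap \<sigma> y)) + int j * 1" if "j < n" for j
    proof -
      have p: "\<sigma> n \<ge> 1" using pos[OF True] by simp
      have "cf_digit (\<sigma> n + j) (gmap \<sigma> y) = 2 ^ \<sigma> n + j"
        using cd[of "\<sigma> n + j"] dig_blk[OF True, of "\<sigma> n + j" y] that p by auto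
      moreover have "cf_digit (\<sigma> n) (gmap \<sigma> y) = 2 ^ \<sigma> n"
        using cd[of "\<sigma> n"] dig_blk[OF True, of "\<sigma> n" y] True p by auto
      ultimately show ?thesis by simp
    qed
    then show ?thesis unfolding is_AP_block_def by blast
  qed
  show ?thesis unfolding G_set_def using J AP by auto
qed

end

lemma hd_pos:
  fixes g :: "real \<Rightarrow> real" and G :: "real set" and C s :: real
  assumes C: "C > 0" and s: "s > 0"
    and gG: "\<And>y. y \<in> {0..<1} \<Longrightarrow> g y \<in> G"
    and hol: "\<And>y y'. y \<in> {0..<1} \<Longrightarrow> y' \<in> {0..<1} \<Longrightarrow> \<bar>y - y'\<bar> \<le> C * \<bar>g y - g y'\<bar> powr s"
  shows "hausdorff_measure s G \<noteq> 0"
proof -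
  have key: "ennreal (1/C) \<le> (\<Sum>i. ennreal (diameter (U i) powr s))"
    if cov: "G \<subseteq> (\<Union>i. U i)" and bd: "\<And>i. bounded (U i)" for U :: "nat \<Rightarrow> real set"
  proof -
    define V where "V i = {y \<in> {0..<1}. g y \<in> U i}" for i
    define d where "d i = C * diameter (U i) powr s" for i
    define I where "I i = {Inf (V i) .. Inf (V i) + d i}" for i
    have d0: "d i \<ge> 0" for i unfolding d_def using C by simp
    have VI: "V i \<subseteq> I i" for i
    proof
      fix y assume y: "y \<in> V i"
      have bb: "bdd_below (V i)" unfolding V_def by (rule bdd_belowI[of _ 0]) auto
      have "Inf (V i) \<le> y" using y bb by (rule cInf_lower)
      moreover have "y - d i \<le> Inf (V i)"
      proof (rule cInf_greatest)
        show "V i \<noteq> {}" using y by auto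
        fix y' assume y': "y' \<in> V i"
        have "\<bar>y - y'\<bar> \<le> C * \<bar>g y - g y'\<bar> powr s" using hol y y' unfolding V_def by auto
        also have "\<dots> \<le> C * diameter (U i) powr s"
        proof -
          have "\<bar>g y - g y'\<bar> \<le> diameter (U i)"
            using diameter_bounded_bound[OF bd[of i], of "g y" "g y'"] y y' unfolding V_def
            by (auto simp: dist_real_def)
          then show ?thesis using C s by (intro mult_left_mono powr_mono2) auto
        qed
        finally show "y - d i \<le> y'" unfolding d_def by linarith
      qed
      ultimately show "y \<in> I i" unfolding I_def by auto
    qed
    have "{0..<1::real} \<subseteq> (\<Union>i. I i)"
    proof
      fix y :: real assume y: "y \<in> {0..<1}"
      then obtain i where "g y \<in> U i" using gG cov by blast
      then have "y \<in> V i" using y unfolding V_def by auto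
      then show "y \<in> (\<Union>i. I i)" using VI by blast
    qed
    then have "emeasure lborel {0..<1::real} \<le> emeasure lborel (\<Union>i. I i)"
      by (intro emeasure_mono) (auto simp: I_def)
    also have "\<dots> \<le> (\<Sum>i. emeasure lborel (I i))"
      by (rule emeasure_subadditive_countably) (auto simp: I_def)
    also have "\<dots> = (\<Sum>i. ennreal C * ennreal (diameter (U i) powr s))"
    proof (rule suminf_cong)
      fix i
      have "emeasure lborel (I i) = ennreal (d i)" unfolding I_def emeasure_lborel_Icc_eq using d0[of i] by simp
      also have "\<dots> = ennreal C * ennreal (diameter (U i) powr s)" unfolding d_def
        by (rule ennreal_mult) (use C in auto)
      finally show "emeasure lborel (I i) = ennreal C * ennreal (diameter (U i) powr s)" .
    qed
    also have "\<dots> = ennreal C * (\<Sum>i. ennreal (diameter (U i) powr s))" by simp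
    finally have 1: "1 \<le> ennreal C * (\<Sum>i. ennreal (diameter (U i) powr s))" by simp
    have "ennreal (1/C) = ennreal (1/C) * 1" by simp
    also have "\<dots> \<le> ennreal (1/C) * (ennreal C * (\<Sum>i. ennreal (diameter (U i) powr s)))"
      by (intro mult_left_mono 1) simp
    also have "\<dots> = (ennreal (1/C) * ennreal C) * (\<Sum>i. ennreal (diameter (U i) powr s))"
      by (simp add: mult.assoc)
    also have "ennreal (1/C) * ennreal C = ennreal (1/C * C)" by (rule ennreal_mult[symmetric]) (use C in auto)
    also have "ennreal (1/C * C) = 1" using C by simp
    finally show ?thesis by simp
  qed
  have "ennreal (1/C) \<le> hausdorff_pre s 1 G"
    unfolding hausdorff_pre_def by (rule INF_greatest) (use key in auto)
  also have "\<dots> \<le> hausdorff_measure s G"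
    unfolding hausdorff_measure_def by (rule SUP_upper) auto
  finally show ?thesis using C by (auto simp: ennreal_eq_0_iff)
qed

lemma h2zero:
  fixes G :: "real set" assumes G: "G \<subseteq> {0..1}"
  shows "hausdorff_measure 2 G = 0"
proof -
  have pre0: "hausdorff_pre 2 \<delta> G = 0" if dpos: "\<delta> > 0" for \<delta>
  proof -
    have bnd: "hausdorff_pre 2 \<delta> G \<le> ennreal (1 / real k)" if k: "k \<ge> 1" "1 / real k \<le> \<delta>" for k :: nat
    proof -
      define U where "U i = (if i < k then {real i / k .. (real i + 1) / k} else {})" for i
      have cov: "G \<subseteq> (\<Union>i. U i)"
      proof
        fix y assume "y \<in> G"
        then have y: "0 \<le> y" "y \<le> 1" using G by auto
        define i where "i = min (nat \<lfloor>y * k\<rfloor>) (k - 1)"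
        have ik: "i < k" unfolding i_def using k by auto
        have "real i \<le> y * k"
        proof -
          have "real i \<le> real (nat \<lfloor>y * k\<rfloor>)" unfolding i_def by simp
          also have "\<dots> = of_int \<lfloor>y * k\<rfloor>" using y by simp
          also have "\<dots> \<le> y * k" by simp
          finally show ?thesis .
        qed
        moreover have "y * k \<le> real i + 1"
        proof (cases "nat \<lfloor>y * k\<rfloor> \<le> k - 1")
          case True
          then have "i = nat \<lfloor>y * k\<rfloor>" unfolding i_def by simp
          then have "real i = of_int \<lfloor>y * k\<rfloor>" using y by simp
          then show ?thesis by linarith
        next
          case False
          then have "i = k - 1" unfolding i_def by simp
          then have "real i + 1 = k" using k by simp
          then show ?thesis using y k by (simp add: mult_le_cancel_right1)
        qed
        ultimately have "y \<in> U i" unfolding U_def using ik k by (auto simp: field_simps)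
        then show "y \<in> (\<Union>i. U i)" by blast
      qed
      have diam: "diameter (U i) = (if i < k then 1 / real k else 0)" for i
        unfolding U_def using k by (auto simp: field_simps)
      have "hausdorff_pre 2 \<delta> G \<le> (\<Sum>i. ennreal (diameter (U i) powr 2))"
        unfolding hausdorff_pre_def
        by (rule INF_lower) (use cov diam that dpos in \<open>auto simp: U_def\<close>)
      also have "(\<Sum>i. ennreal (diameter (U i) powr 2)) = (\<Sum>i<k. ennreal (diameter (U i) powr 2))"
        by (rule suminf_finite) (auto simp: diam)
      also have "\<dots> = (\<Sum>i<k. ennreal ((1 / real k) powr 2))" by (simp add: diam)
      also have "\<dots> = ennreal (real k * (1 / real k) powr 2)" by (simp add: ennreal_of_nat_eq_real_of_nat ennreal_mult)
      also have "real k * (1 / real k) powr 2 = 1 / real k" using k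
        by (simp add: powr_power power2_eq_square)
      finally show ?thesis .
    qed
    obtain k0 :: nat where k0: "k0 \<ge> 1" "1 / real k0 \<le> \<delta>"
    proof -
      obtain n :: nat where "1 / \<delta> < n" using reals_Archimedean2 by blast
      moreover have "0 < 1 / \<delta>" using dpos by simp
      ultimately have n0: "0 < real n" by linarith
      have "1 < real n * \<delta>" using \<open>1 / \<delta> < n\<close> dpos by (simp add: field_simps)
      then have "1 / real n \<le> \<delta>" using n0 by (simp add: field_simps)
      moreover have "n \<ge> 1" using n0 by simp
      ultimately have "n \<ge> 1" "1 / real n \<le> \<delta>" by auto
      then show ?thesis using that by blast
    qed
    have ev: "\<forall>\<^sub>F k in sequentially. hausdorff_pre 2 \<delta> G \<le> ennreal (1 / real k)"
    proof (rule eventually_sequentiallyI[of k0])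
      fix k assume "k0 \<le> k"
      moreover have "1 / real k \<le> 1 / real k0" using \<open>k0 \<le> k\<close> k0 by (simp add: frac_le)
      ultimately show "hausdorff_pre 2 \<delta> G \<le> ennreal (1 / real k)" using bnd k0 by auto
    qed
    have lim: "(\<lambda>k. ennreal (1 / real k)) \<longlonglongrightarrow> ennreal 0"
      by (intro tendsto_ennrealI lim_1_over_n)
    have "hausdorff_pre 2 \<delta> G \<le> ennreal 0"
      by (rule tendsto_le[OF sequentially_bot lim tendsto_const ev])
    then show ?thesis by simp
  qed
  show ?thesis unfolding hausdorff_measure_def using pre0 by simp
qed

lemma dim_ge:
  fixes G :: "real set" and t :: real
  assumes G: "G \<subseteq> {0..1}"
    and pos: "\<And>s. 0 < s \<Longrightarrow> s < t \<Longrightarrow> hausdorff_measure s G \<noteq> 0"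
  shows "hausdorff_dim G \<ge> t"
  unfolding hausdorff_dim_def
proof (rule cInf_greatest)
  have "(2::real) \<in> {s. 0 < s \<and> hausdorff_measure s G = 0}" using h2zero[OF G] by simp
  then show "{s. 0 < s \<and> hausdorff_measure s G = 0} \<noteq> {}" by blast
  fix s assume "s \<in> {s. 0 < s \<and> hausdorff_measure s G = 0}"
  then show "t \<le> s" using pos by force
qed

lemma prod_bound:
  fixes d :: "nat \<Rightarrow> nat"
  assumes "\<And>j. 1 \<le> j \<Longrightarrow> d j < 2 ^ Suc j"
  shows "(\<Prod>j\<in>{1..r}. (real (d j) + 1)^2) \<le> 2 ^ (r * (r + 3))"
proof (induction r)
  case 0 then show ?case by simp
next
  case (Suc r)
  have "d (Suc r) + 1 \<le> 2 ^ (r + 2)" using assms[of "Suc r"] by simp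
  then have "real (d (Suc r) + 1) \<le> real ((2::nat) ^ (r + 2))" by (simp only: of_nat_le_iff)
  then have "real (d (Suc r)) + 1 \<le> 2 ^ (r + 2)" by simp
  then have b: "(real (d (Suc r)) + 1)^2 \<le> (2 ^ (r + 2))^2" by (intro power_mono) auto
  have "(\<Prod>j\<in>{1..Suc r}. (real (d j) + 1)^2) = (\<Prod>j\<in>{1..r}. (real (d j) + 1)^2) * (real (d (Suc r)) + 1)^2"
    by (simp add: prod.nat_ivl_Suc')
  also have "\<dots> \<le> 2 ^ (r * (r + 3)) * (2 ^ (r + 2))^2"
    by (rule mult_mono[OF Suc b]) (auto intro: prod_nonneg)
  also have "(2::real) ^ (r * (r + 3)) * (2 ^ (r + 2))^2 = 2 ^ (Suc r * (Suc r + 3))"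
  proof -
    have "r * (r + 3) + (r + 2) * 2 = Suc r * (Suc r + 3)" by (simp add: algebra_simps)
    then show ?thesis by (simp only: power_mult[symmetric] power_add[symmetric])
  qed
  finally show ?case .
qed

context sig
begin

lemma first_diff:
  assumes y: "y \<in> {0..<1}" "y' \<in> {0..<1}" "y \<noteq> y'"
    and unb: "\<And>n. n \<ge> N \<Longrightarrow> Wf \<sigma> n \<ge> n"
  shows "\<exists>n. 1 \<le> n \<and> \<not> blk \<sigma> n \<and> (\<forall>j<n. Phi \<sigma> y j = Phi \<sigma> y' j) \<and> Phi \<sigma> y n \<noteq> Phi \<sigma> y' n"
proof -
  have dpos: "\<bar>y - y'\<bar> > 0" using y by simp
  obtain n0 :: nat where n0: "2 / \<bar>y - y'\<bar> < n0" using reals_Archimedean2 by blast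
  define n where "n = max n0 N"
  have "real n0 < 2 ^ n0" by (rule of_nat_less_two_power)
  also have "(2::real) ^ n0 \<le> 2 ^ n" unfolding n_def by (intro power_increasing) auto
  also have "(2::real) ^ n \<le> 2 ^ Wf \<sigma> n" using unb[of n] unfolding n_def by (intro power_increasing) auto
  finally have "2 / \<bar>y - y'\<bar> < 2 ^ Wf \<sigma> n" using n0 by linarith
  then have big: "2 < \<bar>y - y'\<bar> * 2 ^ Wf \<sigma> n" using dpos by (simp add: field_simps)
  have ex: "Phi \<sigma> y n \<noteq> Phi \<sigma> y' n"
  proof
    assume e: "Phi \<sigma> y n = Phi \<sigma> y' n"
    let ?a = "y * 2 ^ Wf \<sigma> n" and ?b = "y' * 2 ^ Wf \<sigma> n"
    have "of_int \<lfloor>?a\<rfloor> \<le> ?a" "?a < of_int \<lfloor>?a\<rfloor> + 1" "of_int \<lfloor>?b\<rfloor> \<le> ?b" "?b < of_int \<lfloor>?b\<rfloor> + 1"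
      by linarith+
    moreover have "\<lfloor>?a\<rfloor> = \<lfloor>?b\<rfloor>" using e unfolding Phi_def .
    ultimately have "\<bar>?a - ?b\<bar> < 1" by linarith
    moreover have "\<bar>?a - ?b\<bar> = \<bar>y - y'\<bar> * 2 ^ Wf \<sigma> n" by (simp add: left_diff_distrib[symmetric] abs_mult)
    ultimately show False using big by linarith
  qed
  define m where "m = (LEAST k. Phi \<sigma> y k \<noteq> Phi \<sigma> y' k)"
  have m1: "Phi \<sigma> y m \<noteq> Phi \<sigma> y' m" unfolding m_def by (rule LeastI[of _ n]) (rule ex)
  have m2: "\<forall>j<m. Phi \<sigma> y j = Phi \<sigma> y' j" unfolding m_def using not_less_Least by blast
  have m0: "m \<noteq> 0"
  proof
    assume "m = 0"
    then show False using m1 Phi_0[OF y(1)] Phi_0[OF y(2)] by simp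
  qed
  have mfree: "\<not> blk \<sigma> m"
  proof
    assume b: "blk \<sigma> m"
    have "Phi \<sigma> y m = Phi \<sigma> y (m - 1)" "Phi \<sigma> y' m = Phi \<sigma> y' (m - 1)"
      unfolding Phi_def using Wf_blk[OF b] by auto
    moreover have "Phi \<sigma> y (m - 1) = Phi \<sigma> y' (m - 1)" using m2 m0 by auto
    ultimately show False using m1 by simp
  qed
  show ?thesis using m0 mfree m1 m2 by (intro exI[of _ m]) auto
qed

lemma dig_agree:
  assumes "\<forall>j<n. Phi \<sigma> y j = Phi \<sigma> y' j" "1 \<le> j" "j < n"
  shows "dig \<sigma> y j = dig \<sigma> y' j"
proof -
  have "Phi \<sigma> y j = Phi \<sigma> y' j" "Phi \<sigma> y (j - 1) = Phi \<sigma> y' (j - 1)" using assms by auto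
  then show ?thesis unfolding dig_def cc_def by simp
qed

lemma dig_diff:
  assumes "\<forall>j<n. Phi \<sigma> y j = Phi \<sigma> y' j" "1 \<le> n" "\<not> blk \<sigma> n" "0 \<le> y" "0 \<le> y'"
  shows "real (dig \<sigma> y n) - real (dig \<sigma> y' n) = of_int (Phi \<sigma> y n - Phi \<sigma> y' n)"
proof -
  have e: "Phi \<sigma> y (n - 1) = Phi \<sigma> y' (n - 1)" using assms by auto
  have "int (cc \<sigma> y n) = Phi \<sigma> y n - 2 ^ n * Phi \<sigma> y (n - 1)"
    unfolding cc_def using cc_props(1)[OF assms(2,3,4)] by simp
  moreover have "int (cc \<sigma> y' n) = Phi \<sigma> y' n - 2 ^ n * Phi \<sigma> y' (n - 1)"
    unfolding cc_def using cc_props(1)[OF assms(2,3,5)] by simp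
  ultimately have "int (cc \<sigma> y n) - int (cc \<sigma> y' n) = Phi \<sigma> y n - Phi \<sigma> y' n" using e by simp
  then have "real (cc \<sigma> y n) - real (cc \<sigma> y' n) = of_int (Phi \<sigma> y n - Phi \<sigma> y' n)"
    by (metis of_int_diff of_int_of_nat_eq)
  then show ?thesis unfolding dig_def using assms(3) by simp
qed

lemma y_close:
  "\<bar>y - y'\<bar> \<le> (\<bar>of_int (Phi \<sigma> y n - Phi \<sigma> y' n)\<bar> + 1) / 2 ^ Wf \<sigma> n"
proof -
  let ?P = "(2::real) ^ Wf \<sigma> n"
  let ?a = "y * ?P" and ?b = "y' * ?P"
  have "of_int \<lfloor>?a\<rfloor> \<le> ?a" "?a < of_int \<lfloor>?a\<rfloor> + 1" "of_int \<lfloor>?b\<rfloor> \<le> ?b" "?b < of_int \<lfloor>?b\<rfloor> + 1"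
    by linarith+
  then have h1: "?a - ?b \<le> of_int (\<lfloor>?a\<rfloor> - \<lfloor>?b\<rfloor>) + 1" "?b - ?a \<le> - of_int (\<lfloor>?a\<rfloor> - \<lfloor>?b\<rfloor>) + 1"
    by (simp_all, linarith+)
  have h2: "of_int (\<lfloor>?a\<rfloor> - \<lfloor>?b\<rfloor>) \<le> \<bar>of_int (\<lfloor>?a\<rfloor> - \<lfloor>?b\<rfloor>)::real\<bar>"
     "- of_int (\<lfloor>?a\<rfloor> - \<lfloor>?b\<rfloor>) \<le> \<bar>of_int (\<lfloor>?a\<rfloor> - \<lfloor>?b\<rfloor>)::real\<bar>" by linarith+
  have "\<bar>?a - ?b\<bar> \<le> \<bar>of_int (\<lfloor>?a\<rfloor> - \<lfloor>?b\<rfloor>)\<bar> + 1" unfolding abs_le_iff using h1 h2 by linarith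
  moreover have "\<bar>?a - ?b\<bar> = \<bar>y - y'\<bar> * ?P" by (simp add: left_diff_distrib[symmetric] abs_mult)
  ultimately have "\<bar>y - y'\<bar> * ?P \<le> \<bar>of_int (Phi \<sigma> y n - Phi \<sigma> y' n)\<bar> + 1" unfolding Phi_def by simp
  then show ?thesis by (simp add: field_simps)
qed

end

context sig
begin

lemma g_lower:
  assumes y: "y \<in> {0..<1}" "y' \<in> {0..<1}"
    and eq: "\<forall>j<Suc r. Phi \<sigma> y j = Phi \<sigma> y' j" and fr: "\<not> blk \<sigma> (Suc r)"
  shows "\<bar>gmap \<sigma> y - gmap \<sigma> y'\<bar> \<ge> \<bar>of_int (Phi \<sigma> y (Suc r) - Phi \<sigma> y' (Suc r))\<bar> / 2 ^ ((Suc r)^2 + 3 * Suc r + 1)"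
proof -
  let ?a = "dig \<sigma> y" and ?b = "dig \<sigma> y'"
  let ?D = "\<bar>of_int (Phi \<sigma> y (Suc r) - Phi \<sigma> y' (Suc r))\<bar> :: real"
  have da: "digs ?a" and db: "digs ?b" using digs_dig y by auto
  have agree: "?a j = ?b j" if "1 \<le> j" "j \<le> r" for j
    using dig_agree[OF eq, of j] that by simp
  let ?P = "\<Prod>j\<in>{1..r}. (real (?a j) + 1)^2"
  have P0: "?P > 0" by (intro prod_pos) auto
  have Pb: "?P \<le> 2 ^ (r * (r + 3))" by (rule prod_bound) (use dig_bounds y in auto)
  have pre: "\<bar>gmap \<sigma> y - gmap \<sigma> y'\<bar> \<ge> \<bar>Xcf ?a r - Xcf ?b r\<bar> / ?P"
    unfolding gmap_def by (rule X_prefix_lower[OF da db agree])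
  have last: "\<bar>Xcf ?a r - Xcf ?b r\<bar> \<ge> \<bar>real (?a (Suc r)) - real (?b (Suc r))\<bar> / (2 * (real (?a (Suc r)) + 1) * (real (?b (Suc r)) + 1))"
    by (rule X_last_lower[OF da db])
  have dd: "\<bar>real (?a (Suc r)) - real (?b (Suc r))\<bar> = ?D"
    using dig_diff[OF eq _ fr] y by simp
  have A: "real (?a (Suc r)) + 1 \<le> 2 ^ (r + 2)" and B: "real (?b (Suc r)) + 1 \<le> 2 ^ (r + 2)"
  proof -
    have "?a (Suc r) + 1 \<le> 2 ^ (r + 2)" "?b (Suc r) + 1 \<le> 2 ^ (r + 2)"
      using dig_bounds(2)[of "Suc r" y] dig_bounds(2)[of "Suc r" y'] y by auto
    then have "real (?a (Suc r) + 1) \<le> real ((2::nat) ^ (r + 2))" "real (?b (Suc r) + 1) \<le> real ((2::nat) ^ (r + 2))"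
      by (simp_all only: of_nat_le_iff)
    then show "real (?a (Suc r)) + 1 \<le> 2 ^ (r + 2)" "real (?b (Suc r)) + 1 \<le> 2 ^ (r + 2)" by simp_all
  qed
  have den: "2 * (real (?a (Suc r)) + 1) * (real (?b (Suc r)) + 1) \<le> 2 * 2 ^ (r + 2) * 2 ^ (r + 2)"
    using A B by (intro mult_mono) auto
  have den0: "0 < 2 * (real (?a (Suc r)) + 1) * (real (?b (Suc r)) + 1)" by simp
  have s1: "\<bar>Xcf ?a r - Xcf ?b r\<bar> \<ge> ?D / (2 * 2 ^ (r + 2) * 2 ^ (r + 2))"
  proof -
    have "?D / (2 * 2 ^ (r + 2) * 2 ^ (r + 2)) \<le> ?D / (2 * (real (?a (Suc r)) + 1) * (real (?b (Suc r)) + 1))"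
      by (rule divide_left_mono[OF den]) (use den0 in auto)
    then show ?thesis using last dd by simp
  qed
  have "?D / 2 ^ ((Suc r)^2 + 3 * Suc r + 1) = ?D / (2 * 2 ^ (r + 2) * 2 ^ (r + 2)) / 2 ^ (r * (r + 3))"
  proof -
    have e: "(Suc r)^2 + 3 * Suc r + 1 = 1 + (r + 2) + (r + 2) + r * (r + 3)" by (simp add: power2_eq_square algebra_simps)
    show ?thesis unfolding e by (simp add: power_add divide_divide_eq_left mult_ac)
  qed
  also have "\<dots> \<le> \<bar>Xcf ?a r - Xcf ?b r\<bar> / 2 ^ (r * (r + 3))"
    by (rule divide_right_mono[OF s1]) simp
  also have "\<dots> \<le> \<bar>Xcf ?a r - Xcf ?b r\<bar> / ?P"
    by (rule divide_left_mono[OF Pb]) (use P0 in auto)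
  also have "\<dots> \<le> \<bar>gmap \<sigma> y - gmap \<sigma> y'\<bar>" by (rule pre)
  finally show ?thesis .
qed

end

context sig
begin

lemma holder:
  assumes s: "0 < s" "s < 1"
    and Wg: "\<And>n. n \<ge> N \<Longrightarrow> real (Wf \<sigma> n) \<ge> 1 + real n + s * (real n ^ 2 + 3 * real n + 1)"
    and y: "y \<in> {0..<1}" "y' \<in> {0..<1}"
  shows "\<bar>y - y'\<bar> \<le> 2 powr (real (N^2 + 4*N + 2)) * \<bar>gmap \<sigma> y - gmap \<sigma> y'\<bar> powr s"
proof (cases "y = y'")
  case True then show ?thesis by simp
next
  case False
  have unb: "Wf \<sigma> n \<ge> n" if "n \<ge> N" for n
  proof -
    have "real n \<le> real (Wf \<sigma> n)" using Wg[OF that] s by (smt (verit) mult_nonneg_nonneg of_nat_0_le_iff zero_le_power2)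
    then show ?thesis by simp
  qed
  obtain n where n: "1 \<le> n" "\<not> blk \<sigma> n" "\<forall>j<n. Phi \<sigma> y j = Phi \<sigma> y' j" "Phi \<sigma> y n \<noteq> Phi \<sigma> y' n"
    using first_diff[OF y False unb] by blast
  then obtain r where r: "n = Suc r" by (cases n) auto
  define D :: real where "D = \<bar>of_int (Phi \<sigma> y n - Phi \<sigma> y' n)\<bar>"
  define W where "W = real (Wf \<sigma> n)"
  define E where "E = real n ^ 2 + 3 * real n + 1"
  define K0 where "K0 = real (N^2 + 4*N + 2)"
  have D1: "D \<ge> 1" unfolding D_def using n(4) by linarith
  have D2: "D \<le> 2 powr real n"
  proof -
    have dd: "real (dig \<sigma> y n) - real (dig \<sigma> y' n) = of_int (Phi \<sigma> y n - Phi \<sigma> y' n)"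
      using dig_diff[OF n(3) n(1) n(2)] y by simp
    have "2 ^ n \<le> dig \<sigma> y n" "dig \<sigma> y n < 2 ^ Suc n" "2 ^ n \<le> dig \<sigma> y' n" "dig \<sigma> y' n < 2 ^ Suc n"
      using dig_free[OF n(1) n(2), of y] dig_free[OF n(1) n(2), of y'] y by auto
    then have "real (2 ^ n) \<le> real (dig \<sigma> y n)" "real (dig \<sigma> y n) < real (2 ^ Suc n)"
       "real (2 ^ n) \<le> real (dig \<sigma> y' n)" "real (dig \<sigma> y' n) < real (2 ^ Suc n)"
      by (simp_all only: of_nat_le_iff of_nat_less_iff)
    then have "(2::real) ^ n \<le> real (dig \<sigma> y n)" "real (dig \<sigma> y n) < 2 * 2 ^ n"
       "(2::real) ^ n \<le> real (dig \<sigma> y' n)" "real (dig \<sigma> y' n) < 2 * 2 ^ n"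
      unfolding of_nat_power of_nat_numeral power_Suc by auto
    then have "\<bar>real (dig \<sigma> y n) - real (dig \<sigma> y' n)\<bar> \<le> 2 ^ n" unfolding abs_le_iff by linarith
    then show ?thesis unfolding D_def using dd by (simp add: powr_realpow)
  qed
  have close: "\<bar>y - y'\<bar> \<le> (D + 1) / 2 powr W"
    using y_close[of y y' n] unfolding D_def W_def by (simp add: powr_realpow)
  have low: "\<bar>gmap \<sigma> y - gmap \<sigma> y'\<bar> \<ge> D / 2 powr E"
  proof -
    have "real (n^2 + 3*n + 1) = E" unfolding E_def by simp
    then have "(2::real) ^ (n^2 + 3*n + 1) = 2 powr E" by (metis powr_realpow zero_less_numeral)
    then show ?thesis using g_lower[OF y, of r] n(2,3) r unfolding D_def by simp
  qed
  have expo: "1 + real n - W \<le> K0 - s * E"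
  proof (cases "n \<ge> N")
    case True
    have z: "0 \<le> (real N)^2 + 4 * real N" by simp
    have k: "K0 = (real N)^2 + 4 * real N + 2" unfolding K0_def by simp
    show ?thesis using Wg[OF True] z unfolding W_def E_def k by linarith
  next
    case False
    then have nN: "real n \<le> real N" by simp
    have "E \<le> real N ^ 2 + 3 * real N + 1" unfolding E_def using nN
      by (intro add_mono power_mono) auto
    moreover have "0 \<le> E" unfolding E_def by simp
    ultimately have "s * E \<le> real N ^ 2 + 3 * real N + 1" using s
      by (smt (verit) mult_left_le_one_le)
    moreover have "W \<ge> 0" unfolding W_def by simp
    ultimately show ?thesis unfolding K0_def using nN by simp
  qed
  have "\<bar>y - y'\<bar> \<le> (D + 1) / 2 powr W" by (rule close)
  also have "\<dots> \<le> 2 * D / 2 powr W" using D1 by (intro divide_right_mono) auto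
  also have "2 * D \<le> 2 * (D powr s * 2 powr real n)"
  proof -
    have "D = D powr s * D powr (1 - s)" using D1 by (simp add: powr_add[symmetric])
    also have "D powr (1 - s) \<le> D powr 1" using D1 s by (intro powr_mono) auto
    also have "D powr 1 \<le> 2 powr real n" using D1 D2 by simp
    finally show ?thesis using D1 by (simp add: mult_left_mono)
  qed
  then have "2 * D / 2 powr W \<le> 2 * (D powr s * 2 powr real n) / 2 powr W" by (intro divide_right_mono) auto
  also have "\<dots> = D powr s * 2 powr (1 + real n - W)"
    by (simp add: powr_add powr_diff)
  also have "\<dots> \<le> D powr s * 2 powr (K0 - s * E)"
    using expo by (intro mult_left_mono) auto
  also have "\<dots> = 2 powr K0 * (D / 2 powr E) powr s"
    using D1 by (simp add: powr_divide powr_diff powr_powr mult.commute)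
  also have "\<dots> \<le> 2 powr K0 * \<bar>gmap \<sigma> y - gmap \<sigma> y'\<bar> powr s"
    using low D1 s by (intro mult_left_mono powr_mono2) auto
  finally show ?thesis unfolding K0_def .
qed

end

lemma gauss_real: "(\<Sum>j\<in>{1..n}. real j) = real n * (real n + 1) / 2"
  by (induction n) (auto simp: field_simps)

lemma final_ineq:
  fixes n K M s \<theta> \<delta> :: real
  assumes d: "\<delta> > 0" and K: "K \<ge> 0" and s: "0 \<le> s" "s \<le> 1" and M: "M \<ge> 0" "M^2 \<le> 3 * n"
    and n1: "n \<ge> 1" and n2: "n \<ge> 243 / \<delta>^2" and n3: "n \<ge> 3 * (K + 6) / \<delta>"
    and th: "\<theta> = 1/2 - s - \<delta>"
  shows "n * (n + 1) / 2 - (\<theta> * n^2 + K + M * n + M^3) \<ge> 1 + n + s * (n^2 + 3 * n + 1)"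
proof -
  have sq: "3 * n \<le> \<delta>^2 * n^2 / 81"
  proof -
    have "243 / \<delta>^2 * \<delta>^2 \<le> n * \<delta>^2" using n2 d by (intro mult_right_mono) auto
    then have "243 \<le> \<delta>^2 * n" using d by (simp add: mult.commute)
    then have "243 * n \<le> \<delta>^2 * n * n" using n1 by (intro mult_right_mono) auto
    moreover have "\<delta>^2 * n * n = \<delta>^2 * n^2" by (simp add: power2_eq_square)
    ultimately show ?thesis by linarith
  qed
  have Mb: "M \<le> \<delta> * n / 9"
  proof -
    have "(\<delta> * n / 9)^2 = \<delta>^2 * n^2 / 81" by (simp add: power_divide power_mult_distrib)
    then have "M^2 \<le> (\<delta> * n / 9)^2" using M sq by linarith
    moreover have "0 \<le> \<delta> * n / 9" using d n1 by simp
    ultimately show ?thesis by (rule power2_le_imp_le)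
  qed
  have t1: "M * n \<le> \<delta> * n^2 / 9"
  proof -
    have "M * n \<le> (\<delta> * n / 9) * n" using Mb n1 by (intro mult_right_mono) auto
    then show ?thesis by (simp add: power2_eq_square)
  qed
  have t2: "M^3 \<le> \<delta> * n^2 / 3"
  proof -
    have "M^3 = M * M^2" by (simp add: power3_eq_cube power2_eq_square)
    also have "\<dots> \<le> (\<delta> * n / 9) * (3 * n)" using Mb M by (intro mult_mono) auto
    also have "\<dots> = \<delta> * n^2 / 3" by (simp add: power2_eq_square)
    finally show ?thesis .
  qed
  have t3: "K + 6 * n \<le> \<delta> * n^2 / 3"
  proof -
    have "K * 1 \<le> K * n" by (rule mult_left_mono) (use n1 K in auto)
    then have "K + 6 * n \<le> (K + 6) * n" by (simp add: distrib_right)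
    also have "\<dots> \<le> (\<delta> * n / 3) * n"
    proof (rule mult_right_mono)
      have "3 * (K + 6) / \<delta> * \<delta> \<le> n * \<delta>" using n3 d by (intro mult_right_mono) auto
      then have "3 * (K + 6) \<le> n * \<delta>" using d by simp
      then show "K + 6 \<le> \<delta> * n / 3" by (simp add: mult.commute)
    qed (use n1 in auto)
    also have "\<dots> = \<delta> * n^2 / 3" by (simp add: power2_eq_square)
    finally show ?thesis .
  qed
  have t4a: "s * (3 * n + 1) \<le> 3 * n + 1" using s n1 by (intro mult_left_le_one_le) auto
  have t4: "s * (3 * n + 1) \<le> 4 * n" using t4a n1 by linarith
  have e1: "\<theta> * n^2 = n^2/2 - s * n^2 - \<delta> * n^2" unfolding th by (simp add: algebra_simps)
  have e2: "n * (n + 1) = n^2 + n" by (simp add: power2_eq_square algebra_simps)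
  have e3: "s * (n^2 + 3 * n + 1) = s * n^2 + s * (3 * n + 1)" by (simp add: algebra_simps)
  have e4: "0 \<le> \<delta> * n^2" using d by simp
  show ?thesis unfolding e3 using t1 t2 t3 t4 e1 e2 e4 n1 by linarith
qed

lemma step_ineq:
  fixes a b m \<gamma> :: real
  assumes "a \<ge> 0" "b \<ge> a" "b - a \<ge> \<gamma> * (m + 1)" "\<gamma> > 0" "m \<ge> 0"
  shows "m * a \<le> 1/(2*\<gamma>) * (b^2 - a^2)"
proof -
  have "b^2 - a^2 = (b - a) * (b + a)" by (simp add: power2_eq_square algebra_simps)
  also have "\<dots> \<ge> (\<gamma> * (m + 1)) * (2 * a)" using assms by (intro mult_mono) auto
  finally have "1/(2*\<gamma>) * (b^2 - a^2) \<ge> 1/(2*\<gamma>) * ((\<gamma> * (m + 1)) * (2 * a))"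
    using assms by (intro mult_left_mono) auto
  also have "1/(2*\<gamma>) * ((\<gamma> * (m + 1)) * (2 * a)) = (m + 1) * a" using assms by (simp add: field_simps)
  finally show ?thesis using assms by (simp add: algebra_simps)
qed

context sig
begin

definition Tsum :: "nat \<Rightarrow> real" where
  "Tsum m = (\<Sum>i\<in>{1..<m}. real i * real (\<sigma> i))"

lemma Tsum_Suc: "Tsum (Suc m) = Tsum m + real m * real (\<sigma> m)"
proof (cases "m = 0")
  case True then show ?thesis unfolding Tsum_def by simp
next
  case False
  then show ?thesis unfolding Tsum_def by (subst sum.atLeastLessThan_Suc) auto
qed

lemma Tsum_mono: "m \<le> m' \<Longrightarrow> Tsum m \<le> Tsum m'"
  unfolding Tsum_def by (intro sum_mono2) auto

lemma Tsum_nonneg: "0 \<le> Tsum m"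
  unfolding Tsum_def by (intro sum_nonneg) auto

lemma Tsum_bound:
  assumes g: "\<gamma> > 0" and M0: "M0 \<ge> 1"
    and ell: "\<And>m. m \<ge> M0 \<Longrightarrow> real (\<sigma> (Suc m)) - real (\<sigma> m) \<ge> \<gamma> * (real m + 1)"
  shows "Tsum m \<le> 1/(2*\<gamma>) * real (\<sigma> m)^2 + Tsum M0"
proof (cases "m \<ge> M0")
  case False
  then have "Tsum m \<le> Tsum M0" by (intro Tsum_mono) auto
  moreover have "0 \<le> 1/(2*\<gamma>) * real (\<sigma> m)^2" using g by simp
  ultimately show ?thesis by linarith
next
  case True
  then show ?thesis
  proof (induction m rule: dec_induct)
    case base
    have "0 \<le> 1/(2*\<gamma>) * real (\<sigma> M0)^2" using g by simp
    then show ?case by linarith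
  next
    case (step m)
    have m1: "m \<ge> 1" using step M0 by simp
    have "real m * real (\<sigma> m) \<le> 1/(2*\<gamma>) * (real (\<sigma> (Suc m))^2 - real (\<sigma> m)^2)"
    proof (rule step_ineq)
      show "real (\<sigma> m) \<le> real (\<sigma> (Suc m))" using gap[OF m1] by simp
      show "\<gamma> * (real m + 1) \<le> real (\<sigma> (Suc m)) - real (\<sigma> m)" using ell step by simp
    qed (use g in auto)
    then show ?case using step.IH unfolding Tsum_Suc by (simp add: algebra_simps)
  qed
qed

definition Bs :: "nat \<Rightarrow> real" where
  "Bs n = (\<Sum>j\<in>{j\<in>{1..n}. blk \<sigma> j}. real j)"

lemma W_eq: "real (Wf \<sigma> n) = real n * (real n + 1) / 2 - Bs n"
proof -
  let ?F = "{j\<in>{1..n}. \<not> blk \<sigma> j}" and ?B = "{j\<in>{1..n}. blk \<sigma> j}"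
  have e: "{1..n} = ?F \<union> ?B" by auto
  have fin1: "finite ?F" and fin2: "finite ?B" by auto
  have disj: "?F \<inter> ?B = {}" by auto
  have "(\<Sum>j\<in>{1..n}. real j) = (\<Sum>j\<in>?F \<union> ?B. real j)" by (rule sum.cong[OF e refl])
  also have "\<dots> = (\<Sum>j\<in>?F. real j) + (\<Sum>j\<in>?B. real j)" by (rule sum.union_disjoint[OF fin1 fin2 disj])
  finally have "(\<Sum>j\<in>{1..n}. real j) = (\<Sum>j\<in>?F. real j) + Bs n" unfolding Bs_def .
  moreover have "real (Wf \<sigma> n) = (\<Sum>j\<in>{j\<in>{1..n}. \<not> blk \<sigma> j}. real j)" unfolding Wf_def by simp
  ultimately show ?thesis using gauss_real[of n] by linarith
qed

lemma Bs_bound: "Bs n \<le> (\<Sum>m\<in>{m. 1 \<le> m \<and> m \<le> n \<and> \<sigma> m \<le> n}. real m * (real (\<sigma> m) + real m))"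
proof -
  let ?A = "{m. 1 \<le> m \<and> m \<le> n \<and> \<sigma> m \<le> n}"
  let ?I = "\<lambda>m. {\<sigma> m..<\<sigma> m + m}"
  have finA: "finite ?A" by (rule finite_subset[of _ "{..n}"]) auto
  have sub: "{j\<in>{1..n}. blk \<sigma> j} \<subseteq> (\<Union>m\<in>?A. ?I m)"
  proof
    fix j assume j: "j \<in> {j\<in>{1..n}. blk \<sigma> j}"
    then obtain m where m: "1 \<le> m" "\<sigma> m \<le> j" "j < \<sigma> m + m" unfolding blk_def by auto
    have "m \<le> \<sigma> m" by (rule sig_ge_m[OF m(1)])
    then have "m \<in> ?A" using m j by auto
    moreover have "j \<in> ?I m" using m by auto
    ultimately show "j \<in> (\<Union>m\<in>?A. ?I m)" by blast
  qed
  have "Bs n \<le> (\<Sum>j\<in>(\<Union>m\<in>?A. ?I m). real j)"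
    unfolding Bs_def by (rule sum_mono2[OF _ sub]) (use finA in auto)
  also have "\<dots> = (\<Sum>m\<in>?A. \<Sum>j\<in>?I m. real j)"
  proof (rule sum.UNION_disjoint[OF finA])
    show "\<forall>i\<in>?A. finite (?I i)" by simp
    show "\<forall>i\<in>?A. \<forall>k\<in>?A. i \<noteq> k \<longrightarrow> ?I i \<inter> ?I k = {}"
    proof (intro ballI impI)
      fix i k assume ik: "i \<in> ?A" "k \<in> ?A" "i \<noteq> k"
      show "?I i \<inter> ?I k = {}"
      proof (rule ccontr)
        assume "?I i \<inter> ?I k \<noteq> {}"
        then obtain j where j: "j \<in> ?I i" "j \<in> ?I k" by blast
        have "i = k" by (rule blk_uniq[of i j k]) (use ik j in auto)
        then show False using ik by simp
      qed
    qed
  qed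
  also have "\<dots> \<le> (\<Sum>m\<in>?A. real m * (real (\<sigma> m) + real m))"
  proof (rule sum_mono)
    fix m assume "m \<in> ?A"
    have "(\<Sum>j\<in>?I m. real j) \<le> of_nat (card (?I m)) * (real (\<sigma> m) + real m)"
      by (rule sum_bounded_above) auto
    then show "(\<Sum>j\<in>?I m. real j) \<le> real m * (real (\<sigma> m) + real m)" by simp
  qed
  finally show ?thesis .
qed

end

context sig
begin

lemma Bs_final:
  assumes g: "\<gamma> > 0" and M0: "M0 \<ge> 1"
    and ell: "\<And>m. m \<ge> M0 \<Longrightarrow> real (\<sigma> (Suc m)) - real (\<sigma> m) \<ge> \<gamma> * (real m + 1)"
  shows "\<exists>M::real. M \<ge> 0 \<and> M^2 \<le> 3 * real n \<and> Bs n \<le> 1/(2*\<gamma>) * (real n)^2 + Tsum M0 + M * real n + M^3"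
proof -
  let ?A = "{m. 1 \<le> m \<and> m \<le> n \<and> \<sigma> m \<le> n}"
  let ?\<theta> = "1/(2*\<gamma>)"
  have finA: "finite ?A" by (rule finite_subset[of _ "{..n}"]) auto
  have th0: "?\<theta> \<ge> 0" using g by simp
  have K0: "Tsum M0 \<ge> 0" by (rule Tsum_nonneg)
  show ?thesis
  proof (cases "?A = {}")
    case True
    have "Bs n \<le> 0" using Bs_bound[of n] unfolding True by simp
    moreover have "0 \<le> ?\<theta> * (real n)^2" using th0 by simp
    ultimately show ?thesis using K0 by (intro exI[of _ 0]) auto
  next
    case False
    define Mn where "Mn = Max ?A"
    have MA: "Mn \<in> ?A" unfolding Mn_def using finA False by (rule Max_in)
    have Mle: "m \<le> Mn" if "m \<in> ?A" for m unfolding Mn_def using finA that by (rule Max_ge)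
    have sub: "?A \<subseteq> {1..<Suc Mn}"
    proof
      fix x assume x: "x \<in> ?A"
      then have "x \<le> Mn" by (rule Mle)
      then show "x \<in> {1..<Suc Mn}" using x by simp
    qed
    have s1: "(\<Sum>m\<in>?A. real m * real (\<sigma> m)) \<le> Tsum (Suc Mn)"
      unfolding Tsum_def by (rule sum_mono2[OF _ sub]) auto
    have cardA: "card ?A \<le> Mn"
    proof -
      have "card ?A \<le> card {1..<Suc Mn}" by (rule card_mono[OF _ sub]) simp
      then show ?thesis by simp
    qed
    have s2: "(\<Sum>m\<in>?A. real m * real m) \<le> real Mn ^ 3"
    proof -
      have "(\<Sum>m\<in>?A. real m * real m) \<le> of_nat (card ?A) * (real Mn * real Mn)"
        by (rule sum_bounded_above) (use Mle in \<open>auto intro: mult_mono\<close>)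
      also have "\<dots> \<le> real Mn * (real Mn * real Mn)" using cardA by (intro mult_right_mono) auto
      finally show ?thesis by (simp add: power3_eq_cube)
    qed
    have sMn: "real (\<sigma> Mn) \<le> real n" "real Mn \<le> real n" "Mn \<ge> 1" using MA by auto
    have Tb: "Tsum Mn \<le> ?\<theta> * real (\<sigma> Mn)^2 + Tsum M0" by (rule Tsum_bound[OF g M0 ell])
    have "?\<theta> * real (\<sigma> Mn)^2 \<le> ?\<theta> * (real n)^2" using sMn th0 by (intro mult_left_mono power_mono) auto
    moreover have "real Mn * real (\<sigma> Mn) \<le> real Mn * real n" using sMn by (intro mult_left_mono) auto
    ultimately have s3: "Tsum (Suc Mn) \<le> ?\<theta> * (real n)^2 + Tsum M0 + real Mn * real n"
      using Tb unfolding Tsum_Suc by linarith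
    have "Bs n \<le> (\<Sum>m\<in>?A. real m * (real (\<sigma> m) + real m))" by (rule Bs_bound)
    also have "\<dots> = (\<Sum>m\<in>?A. real m * real (\<sigma> m)) + (\<Sum>m\<in>?A. real m * real m)"
      by (simp add: distrib_left sum.distrib)
    finally have Bb: "Bs n \<le> ?\<theta> * (real n)^2 + Tsum M0 + real Mn * real n + real Mn ^ 3"
      using s1 s2 s3 by linarith
    have "Mn * Mn \<le> 3 * n" using sig_ge[OF sMn(3)] MA by auto
    then have "real (Mn * Mn) \<le> real (3 * n)" by (simp only: of_nat_le_iff)
    then have "(real Mn)^2 \<le> 3 * real n" by (simp add: power2_eq_square)
    then show ?thesis using Bb by (intro exI[of _ "real Mn"]) auto
  qed
qed

lemma Wgrow:
  assumes s: "0 < s" "s < 1" and g: "\<gamma> > 0" and dl: "1/2 - 1/(2*\<gamma>) - s > 0" and M0: "M0 \<ge> 1"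
    and ell: "\<And>m. m \<ge> M0 \<Longrightarrow> real (\<sigma> (Suc m)) - real (\<sigma> m) \<ge> \<gamma> * (real m + 1)"
  shows "\<exists>N. \<forall>n\<ge>N. real (Wf \<sigma> n) \<ge> 1 + real n + s * (real n ^ 2 + 3 * real n + 1)"
proof -
  define \<delta> where "\<delta> = 1/2 - 1/(2*\<gamma>) - s"
  define K where "K = Tsum M0"
  have d: "\<delta> > 0" using dl unfolding \<delta>_def .
  have K: "K \<ge> 0" unfolding K_def by (rule Tsum_nonneg)
  define N where "N = nat \<lceil>243 / \<delta>^2 + 3 * (K + 6) / \<delta>\<rceil> + 1"
  have b1: "0 \<le> 243 / \<delta>^2" "0 \<le> 3 * (K + 6) / \<delta>" using d K by auto
  show ?thesis
  proof (intro exI allI impI)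
    fix n assume nN: "N \<le> n"
    have "243 / \<delta>^2 + 3 * (K + 6) / \<delta> \<le> real (nat \<lceil>243 / \<delta>^2 + 3 * (K + 6) / \<delta>\<rceil>)"
      by linarith
    also have "\<dots> + 1 \<le> real n" using nN unfolding N_def by linarith
    finally have nb: "243 / \<delta>^2 + 3 * (K + 6) / \<delta> + 1 \<le> real n" by simp
    obtain M :: real where M: "M \<ge> 0" "M^2 \<le> 3 * real n"
      and Bb: "Bs n \<le> 1/(2*\<gamma>) * (real n)^2 + K + M * real n + M^3"
      using Bs_final[OF g M0 ell, of n] unfolding K_def by blast
    have fi: "real n * (real n + 1) / 2 - (1/(2*\<gamma>) * (real n)^2 + K + M * real n + M^3)
        \<ge> 1 + real n + s * ((real n)^2 + 3 * real n + 1)"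
    proof -
      have n1: "1 \<le> real n" and n2: "243 / \<delta>^2 \<le> real n" and n3: "3 * (K + 6) / \<delta> \<le> real n"
        using nb b1 by linarith+
      have th: "1/(2*\<gamma>) = 1/2 - s - \<delta>" unfolding \<delta>_def by simp
      show ?thesis by (rule final_ineq[OF d K _ _ M n1 n2 n3 th]) (use s in auto)
    qed
    show "real (Wf \<sigma> n) \<ge> 1 + real n + s * (real n ^ 2 + 3 * real n + 1)"
      using fi Bb W_eq[of n] by linarith
  qed
qed

end

theorem proposition4p2:
  fixes \<sigma> :: "nat \<Rightarrow> nat" and \<beta> :: ereal
  assumes pos: "\<And>n. n \<ge> 1 \<Longrightarrow> 0 < \<sigma> n"
    and incr: "\<And>n. n \<ge> 1 \<Longrightarrow> \<sigma> n < \<sigma> (Suc n)"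
    and gap: "\<And>n. n \<ge> 1 \<Longrightarrow> \<sigma> (Suc n) \<ge> \<sigma> n + n"
    and beta_ge: "\<beta> \<ge> 1"
    and lim: "(\<lambda>n. ereal ((real (\<sigma> n) - real (\<sigma> (n - 1))) / real n)) \<longlonglongrightarrow> \<beta>"
  shows "hausdorff_dim (G_set \<sigma>) \<ge>
           (if \<beta> = \<infinity> then 1 / 2 else (real_of_ereal \<beta> - 1) / (2 * real_of_ereal \<beta>))"
proof -
  interpret sig \<sigma> using pos gap by unfold_locales auto
  define t where "t = (if \<beta> = \<infinity> then 1 / 2 else (real_of_ereal \<beta> - 1) / (2 * real_of_ereal \<beta>))"
  have GJ: "G_set \<sigma> \<subseteq> {0..1}" unfolding G_set_def J_set_def by auto
  have main: "hausdorff_measure s (G_set \<sigma>) \<noteq> 0" if s0: "0 < s" and st: "s < t" for s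
  proof -
    have s2: "s < 1/2"
    proof (cases "\<beta> = \<infinity>")
      case True then show ?thesis using st unfolding t_def by simp
    next
      case False
      then obtain b where b: "\<beta> = ereal b" using beta_ge by (cases \<beta>) auto
      then have b1: "b \<ge> 1" using beta_ge by simp
      have h: "(b - 1) / (2 * b) < 1/2" using b1 by (simp add: field_simps)
      have "s < (b - 1) / (2 * b)" using st b unfolding t_def by simp
      then show ?thesis using h by linarith
    qed
    define c where "c = 1 / (1 - 2 * s)"
    have c0: "c > 0" unfolding c_def using s2 by simp
    obtain \<gamma> :: real where g1: "\<gamma> > c" and g2: "ereal \<gamma> < \<beta>"
    proof (cases "\<beta> = \<infinity>")
      case True
      show ?thesis by (rule that[of "c + 1"]) (use True in auto)
    next
      case False
      then obtain b where b: "\<beta> = ereal b" using beta_ge by (cases \<beta>) auto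
      then have b1: "b \<ge> 1" using beta_ge by simp
      have "s < (b - 1) / (2 * b)" using st b False unfolding t_def by simp
      then have "2 * b * s < b - 1" using b1 by (simp add: field_simps)
      then have "1 < b * (1 - 2 * s)" by (simp add: algebra_simps)
      then have cb: "c < b" unfolding c_def using s2 by (simp add: field_simps)
      show ?thesis by (rule that[of "(c + b) / 2"]) (use cb b in auto)
    qed
    have g0: "\<gamma> > 0" using g1 c0 by simp
    have dl: "1/2 - 1/(2*\<gamma>) - s > 0"
    proof -
      have "1 / \<gamma> < 1 / c" using g1 c0 by (simp add: frac_less2)
      then have "1 / \<gamma> < 1 - 2 * s" unfolding c_def by simp
      then show ?thesis by simp
    qed
    have "\<forall>\<^sub>F n in sequentially. ereal ((real (\<sigma> n) - real (\<sigma> (n - 1))) / real n) > ereal \<gamma>"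
      using lim g2 by (rule order_tendstoD(1))
    then obtain N1 where N1: "\<And>n. n \<ge> N1 \<Longrightarrow> (real (\<sigma> n) - real (\<sigma> (n - 1))) / real n > \<gamma>"
      unfolding eventually_sequentially by auto
    define M0 where "M0 = max N1 1"
    have ell: "real (\<sigma> (Suc m)) - real (\<sigma> m) \<ge> \<gamma> * (real m + 1)" if "m \<ge> M0" for m
    proof -
      have "(real (\<sigma> (Suc m)) - real (\<sigma> (Suc m - 1))) / real (Suc m) > \<gamma>"
        using N1[of "Suc m"] that unfolding M0_def by auto
      then have "\<gamma> * real (Suc m) < real (\<sigma> (Suc m)) - real (\<sigma> m)" by (simp add: field_simps)
      then show ?thesis by (simp add: add.commute)
    qed
    obtain N where N: "\<And>n. n \<ge> N \<Longrightarrow> real (Wf \<sigma> n) \<ge> 1 + real n + s * (real n ^ 2 + 3 * real n + 1)"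
    proof -
      have s1: "s < 1" using s2 by simp
      have M01: "M0 \<ge> 1" unfolding M0_def by simp
      show ?thesis using Wgrow[of s \<gamma> M0, OF s0 s1 g0 dl M01 ell] that by blast
    qed
    have hol: "\<bar>y - y'\<bar> \<le> 2 powr (real (N^2 + 4*N + 2)) * \<bar>gmap \<sigma> y - gmap \<sigma> y'\<bar> powr s"
      if "y \<in> {0..<1}" "y' \<in> {0..<1}" for y y'
      by (rule holder[OF s0 _ N that]) (use s2 in simp)
    show ?thesis by (rule hd_pos[OF _ s0 gmap_G hol]) auto
  qed
  have "hausdorff_dim (G_set \<sigma>) \<ge> t" by (rule dim_ge[OF GJ main])
  then show ?thesis unfolding t_def .
qed

end
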